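(* Let $(E,\tau)$ be a locally solid vector lattice. Suppose that there exists a metrisable (Hausdorff) linear topology $\tau^\ast$ on $E$ that is coarser than $\tau$. Then there exists a metrisable locally solid topology $\widetilde\tau$ on $E$ that is coarser than $\tau$ and finer than $\tau^\ast$. If $\tau$ is an o-Lebesgue topology (resp. a uo-Lebesgue topology), then any such $\widetilde\tau$ is an o-Lebesgue topology (resp. a uo-Lebesgue topology). If $\tau$ is a Fatou topology, then $\widetilde\tau$ can be chosen to be a Fatou topology.
   Context: All vector lattices are real and Archimedean; linear topologies are Hausdorff. A locally solid topology on a vector lattice $E$ is a linear topology such that zero has a neighbourhood basis of solid sets. A net $(x_\alpha)$ in $E$ order converges to $x$ if there is a net $(y_\beta)$ with $y_\beta\downarrow 0$ such that for every $\beta_0$ there is $\alpha_0$ with $|x_\alpha-x|\leq y_{\beta_0}$ for all $\alpha\geq\alpha_0$. It uo-converges to $x$ if $|x_\alpha-x|\wedge|y|$ order converges to $0$ for every $y\in E$. A subset $S$ is order closed if it contains all order limits of nets in $S$. A locally solid topology $\tau$ is an o-Lebesgue topology (resp. uo-Lebesgue topology) if every net that order converges (resp. uo-converges) to $x$ also $\tau$-converges to $x$; it is a Fatou topology if zero has a neighbourhood basis of order closed solid sets. *)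

theory Defs
  imports "HOL-Analysis.Analysis"
begin

text \<open>Nets are represented by filters: a net (x_i) over a directed index set corresponds to
  the function x together with the section filter of the index set.\<close>

definition lat_abs :: "'a::{ordered_real_vector,lattice} \<Rightarrow> 'a" where
  "lat_abs x = sup x (- x)"

definition archimedean_vl :: "'a::{ordered_real_vector,lattice} itself \<Rightarrow> bool" where
  "archimedean_vl _ \<longleftrightarrow> (\<forall>x y::'a. (\<forall>n::nat. real n *\<^sub>R x \<le> y) \<longrightarrow> x \<le> 0)"

definition solid :: "'a::{ordered_real_vector,lattice} set \<Rightarrow> bool" where
  "solid S \<longleftrightarrow> (\<forall>x y. x \<in> S \<and> lat_abs y \<le> lat_abs x \<longrightarrow> y \<in> S)"

text \<open>A decreasing net y_b with infimum 0 is represented by its range D: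
  a nonempty downward directed set whose greatest lower bound is 0.\<close>
definition downdir_to_zero :: "'a::{ordered_real_vector,lattice} set \<Rightarrow> bool" where
  "downdir_to_zero D \<longleftrightarrow> D \<noteq> {} \<and> (\<forall>a\<in>D. \<forall>b\<in>D. \<exists>c\<in>D. c \<le> a \<and> c \<le> b)
     \<and> (\<forall>d\<in>D. 0 \<le> d) \<and> (\<forall>z. (\<forall>d\<in>D. z \<le> d) \<longrightarrow> z \<le> 0)"

definition order_conv :: "('i \<Rightarrow> 'a::{ordered_real_vector,lattice}) \<Rightarrow> 'a \<Rightarrow> 'i filter \<Rightarrow> bool" where
  "order_conv f x F \<longleftrightarrow>
     (\<exists>D. downdir_to_zero D \<and> (\<forall>d\<in>D. eventually (\<lambda>i. lat_abs (f i - x) \<le> d) F))"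

definition uo_conv :: "('i \<Rightarrow> 'a::{ordered_real_vector,lattice}) \<Rightarrow> 'a \<Rightarrow> 'i filter \<Rightarrow> bool" where
  "uo_conv f x F \<longleftrightarrow> (\<forall>y. order_conv (\<lambda>i. inf (lat_abs (f i - x)) (lat_abs y)) 0 F)"

definition order_closed :: "'a::{ordered_real_vector,lattice} set \<Rightarrow> bool" where
  "order_closed S \<longleftrightarrow>
     (\<forall>(F::'a filter) x. F \<noteq> bot \<and> eventually (\<lambda>z. z \<in> S) F \<and> order_conv id x F \<longrightarrow> x \<in> S)"

definition linear_topology :: "'a::real_vector topology \<Rightarrow> bool" where
  "linear_topology T \<longleftrightarrow> topspace T = UNIV \<and> Hausdorff_space T
     \<and> continuous_map (prod_topology T T) T (\<lambda>(x, y). x + y)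
     \<and> continuous_map (prod_topology euclideanreal T) T (\<lambda>(c, x). c *\<^sub>R x)"

definition zero_nbhd :: "'a::real_vector topology \<Rightarrow> 'a set \<Rightarrow> bool" where
  "zero_nbhd T V \<longleftrightarrow> (\<exists>W. openin T W \<and> 0 \<in> W \<and> W \<subseteq> V)"

definition locally_solid :: "'a::{ordered_real_vector,lattice} topology \<Rightarrow> bool" where
  "locally_solid T \<longleftrightarrow> linear_topology T \<and>
     (\<forall>U. zero_nbhd T U \<longrightarrow> (\<exists>V. zero_nbhd T V \<and> solid V \<and> V \<subseteq> U))"

definition Fatou_topology :: "'a::{ordered_real_vector,lattice} topology \<Rightarrow> bool" where
  "Fatou_topology T \<longleftrightarrow> locally_solid T \<and>
     (\<forall>U. zero_nbhd T U \<longrightarrow> (\<exists>V. zero_nbhd T V \<and> solid V \<and> order_closed V \<and> V \<subseteq> U))"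

definition o_Lebesgue :: "'a::{ordered_real_vector,lattice} topology \<Rightarrow> bool" where
  "o_Lebesgue T \<longleftrightarrow> locally_solid T \<and>
     (\<forall>(F::'a filter) x. order_conv id x F \<longrightarrow> limitin T id x F)"

definition uo_Lebesgue :: "'a::{ordered_real_vector,lattice} topology \<Rightarrow> bool" where
  "uo_Lebesgue T \<longleftrightarrow> locally_solid T \<and>
     (\<forall>(F::'a filter) x. uo_conv id x F \<longrightarrow> limitin T id x F)"

definition coarser :: "'a topology \<Rightarrow> 'a topology \<Rightarrow> bool" where
  "coarser T1 T2 \<longleftrightarrow> (\<forall>U. openin T1 U \<longrightarrow> openin T2 U)"

end

theory Submission
  imports Defs
begin

lemma lat_abs_nonneg: "0 \<le> lat_abs (x::'a::{ordered_real_vector,lattice})"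
proof -
  have "x \<le> lat_abs x" "- x \<le> lat_abs x" by (auto simp: lat_abs_def)
  then have "x + - x \<le> lat_abs x + lat_abs x" by (rule add_mono)
  then have "0 \<le> (2::real) *\<^sub>R lat_abs x" by (simp add: scaleR_2)
  then show ?thesis unfolding zero_le_scaleR_iff by simp
qed

lemma lat_abs_neg: "lat_abs (- (x::'a::{ordered_real_vector,lattice})) = lat_abs x"
  by (simp add: lat_abs_def sup_commute)

lemma lat_abs_scale_le:
  fixes x :: "'a::{ordered_real_vector,lattice}"
  assumes "\<bar>c\<bar> \<le> 1"
  shows "lat_abs (c *\<^sub>R x) \<le> lat_abs x"
proof -
  let ?s = "lat_abs x"
  have s0: "0 \<le> ?s" by (rule lat_abs_nonneg)
  have xs: "x \<le> ?s" "- x \<le> ?s" by (auto simp: lat_abs_def)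
  have key: "\<And>a y. 0 \<le> a \<Longrightarrow> a \<le> 1 \<Longrightarrow> y \<le> ?s \<Longrightarrow> a *\<^sub>R y \<le> ?s"
  proof -
    fix a :: real and y assume a: "0 \<le> a" "a \<le> 1" "y \<le> ?s"
    have "a *\<^sub>R y \<le> a *\<^sub>R ?s" using a by (simp add: scaleR_left_mono)
    also have "a *\<^sub>R ?s \<le> 1 *\<^sub>R ?s" using a s0 by (intro scaleR_right_mono) auto
    finally show "a *\<^sub>R y \<le> ?s" by simp
  qed
  show ?thesis
  proof (cases "0 \<le> c")
    case True
    then have "c *\<^sub>R x \<le> ?s" "c *\<^sub>R (- x) \<le> ?s" using assms key[OF _ _ xs(1)] key[OF _ _ xs(2)] by auto
    then have "c *\<^sub>R x \<le> ?s" "- (c *\<^sub>R x) \<le> ?s" by (auto simp only: scaleR_minus_right)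
    then show ?thesis by (simp add: lat_abs_def)
  next
    case False
    then have "(-c) *\<^sub>R (-x) \<le> ?s" "(-c) *\<^sub>R x \<le> ?s" using assms key[OF _ _ xs(1), of "-c"] key[OF _ _ xs(2), of "-c"] by auto
    then have "c *\<^sub>R x \<le> ?s" "- (c *\<^sub>R x) \<le> ?s" by (auto simp only: scaleR_minus_right scaleR_minus_left minus_minus)
    then show ?thesis by (simp add: lat_abs_def)
  qed
qed

lemma solid_neg: "solid S \<Longrightarrow> x \<in> S \<Longrightarrow> - x \<in> S"
  unfolding solid_def by (metis lat_abs_neg order_refl)

lemma solid_scale: "solid S \<Longrightarrow> x \<in> S \<Longrightarrow> \<bar>c\<bar> \<le> 1 \<Longrightarrow> c *\<^sub>R x \<in> S"
  unfolding solid_def using lat_abs_scale_le by blast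

definition sw :: "nat list \<Rightarrow> real" where
  "sw ks = sum_list (map (\<lambda>k. (1/2::real)^k) ks)"

lemma sw_mset: "sw ks = sum_mset (image_mset (\<lambda>k. (1/2::real)^k) (mset ks))"
  by (simp add: sw_def sum_mset_sum_list flip: mset_map)

lemma sw_perm: "mset ks = mset ls \<Longrightarrow> sw ks = sw ls"
  by (simp add: sw_mset)

lemma sw_Cons [simp]: "sw (k # ks) = (1/2)^k + sw ks" by (simp add: sw_def)
lemma sw_Nil [simp]: "sw [] = 0" by (simp add: sw_def)
lemma sw_append [simp]: "sw (ks @ ls) = sw ks + sw ls" by (simp add: sw_def)
lemma sw_nonneg: "0 \<le> sw ks" by (induction ks) auto
lemma sw_pos: "ks \<noteq> [] \<Longrightarrow> 0 < sw ks"
  by (cases ks) (auto intro: add_pos_nonneg sw_nonneg)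

lemma half_pow_mult: "k \<le> m \<Longrightarrow> (1/2::real)^k * 2^m = 2^(m-k)"
proof -
  assume "k \<le> m"
  then have "(2::real)^m = 2^k * 2^(m-k)" by (simp flip: power_add)
  then show ?thesis by (simp add: power_one_over)
qed

lemma sw_mult: "\<forall>k\<in>set ks. k \<le> m \<Longrightarrow> sw ks * 2^m = real (\<Sum>k\<leftarrow>ks. 2^(m-k))"
  by (induction ks) (auto simp: distrib_right half_pow_mult)

locale Vseq =
  fixes V :: "nat \<Rightarrow> 'a::{ordered_real_vector,lattice} set"
  assumes V0: "V 0 = UNIV"
  and zeroV: "0 \<in> V n"
  and solidV: "solid (V n)"
  and plusV: "x \<in> V (Suc n) \<Longrightarrow> y \<in> V (Suc n) \<Longrightarrow> x + y \<in> V n"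
  and sepV: "x \<noteq> 0 \<Longrightarrow> \<exists>n. x \<notin> V n"
  and absorbV: "\<exists>\<delta>>0. \<forall>t. \<bar>t\<bar> < \<delta> \<longrightarrow> t *\<^sub>R x \<in> V n"
begin

lemma V_Suc: "V (Suc n) \<subseteq> V n"
  using plusV[of _ n 0] zeroV by fastforce

lemma V_anti: "n \<le> m \<Longrightarrow> V m \<subseteq> V n"
  by (induction m rule: dec_induct) (use V_Suc in auto)

lemma V_neg: "x \<in> V n \<Longrightarrow> - x \<in> V n"
  using solidV solid_neg by blast

lemma V_scale: "\<bar>c\<bar> \<le> 2^j \<Longrightarrow> x \<in> V (n + j) \<Longrightarrow> c *\<^sub>R x \<in> V n"
proof (induction j arbitrary: c n)
  case 0
  then show ?case using solidV solid_scale by fastforce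
next
  case (Suc j)
  have h1: "\<bar>c/2\<bar> \<le> 2^j" using Suc.prems by simp
  have h2: "x \<in> V (Suc n + j)" using Suc.prems by simp
  note hh = Suc.IH[where c="c/2" and n="Suc n", OF h1 h2]
  from plusV[OF hh hh] show ?case by (simp flip: scaleR_add_left)
qed

fun W :: "nat list \<Rightarrow> 'a set" where
  "W [] = {0}"
| "W (k # ks) = {x + y | x y. x \<in> V k \<and> y \<in> W ks}"

lemma W_append: "x \<in> W ks \<Longrightarrow> y \<in> W ls \<Longrightarrow> x + y \<in> W (ks @ ls)"
proof (induction ks arbitrary: x)
  case Nil then show ?case by simp
next
  case (Cons k ks)
  then obtain a b where "x = a + b" "a \<in> V k" "b \<in> W ks" by auto
  moreover have "b + y \<in> W (ks @ ls)" using Cons.IH[of b] Cons.prems \<open>b \<in> W ks\<close> by blast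
  ultimately have "a + (b + y) \<in> W ((k # ks) @ ls)" by auto
  then show ?case using \<open>x = a + b\<close> by (simp add: add.assoc)
qed

lemma W_split: "x \<in> W (ks @ ls) \<Longrightarrow> \<exists>a b. a \<in> W ks \<and> b \<in> W ls \<and> x = a + b"
proof (induction ks arbitrary: x)
  case Nil then show ?case by force
next
  case (Cons k ks)
  then obtain a b where ab: "x = a + b" "a \<in> V k" "b \<in> W (ks @ ls)" by auto
  then obtain c e where "c \<in> W ks" "e \<in> W ls" "b = c + e" using Cons.IH by blast
  moreover have "a + c \<in> W (k # ks)" using ab \<open>c \<in> W ks\<close> by auto
  ultimately show ?case using ab by (metis add.assoc)
qed

lemma W_perm: "mset ks = mset ls \<Longrightarrow> x \<in> W ks \<Longrightarrow> x \<in> W ls"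
proof (induction ks arbitrary: ls x)
  case Nil then show ?case by simp
next
  case (Cons k ks)
  then obtain v y where vy: "x = v + y" "v \<in> V k" "y \<in> W ks" by auto
  have "k \<in> set ls" using Cons.prems(1) by (metis list.set_intros(1) set_mset_mset)
  then obtain as bs where ls: "ls = as @ k # bs" by (meson split_list)
  have "mset ks = mset (as @ bs)" using Cons.prems(1) ls by simp
  then have "y \<in> W (as @ bs)" using Cons.IH vy by blast
  then obtain a b where ab: "a \<in> W as" "b \<in> W bs" "y = a + b" using W_split by blast
  have "v + b \<in> W (k # bs)" using vy ab by auto
  then have "a + (v + b) \<in> W ls" unfolding ls using ab W_append by blast
  then show ?case using vy ab by (simp add: algebra_simps)
qed

lemma W_neg: "x \<in> W ks \<Longrightarrow> - x \<in> W ks"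
proof (induction ks arbitrary: x)
  case Nil then show ?case by simp
next
  case (Cons k ks)
  then obtain a b where "x = a + b" "a \<in> V k" "b \<in> W ks" by auto
  moreover have eq: "-x = -a + -b" using \<open>x = a + b\<close> by simp
  ultimately show ?case unfolding W.simps eq using Cons.IH V_neg by blast
qed

lemma mset_remove1_cons: "a \<in> set ys \<Longrightarrow> mset ys = mset (a # remove1 a ys)"
  by simp

lemma sum_list_perm: "mset ks = mset ls \<Longrightarrow> sum_list (ks::nat list) = sum_list ls"
  by (metis sum_mset_sum_list)

lemma carry: "sw ks \<le> (1/2)^n \<Longrightarrow> x \<in> W ks \<Longrightarrow> x \<in> V n"
proof (induction "sum_list ks" arbitrary: ks x rule: less_induct)
  case less
  consider "ks = []" | k where "ks = [k]" | k1 k2 r where "ks = k1 # k2 # r"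
    by (metis list.exhaust)
  then show ?case
  proof cases
    case 1
    then show ?thesis using less.prems zeroV by simp
  next
    case 2
    then obtain v where v: "x = v" "v \<in> V k" using less.prems by auto
    have "(1/2::real)^k \<le> (1/2)^n" using less.prems 2 by simp
    then have "n \<le> k" by (simp add: power_decreasing_iff)
    then show ?thesis using v V_anti by blast
  next
    case 3
    have gt: "n < k" if k: "k \<in> set ks" for k
    proof -
      have pk: "mset ks = mset (k # remove1 k ks)" using k by simp
      have "sw ks = (1/2)^k + sw (remove1 k ks)" using sw_perm[OF pk] by simp
      moreover have "length (remove1 k ks) = length ks - 1" using k by (simp add: length_remove1)
      then have "remove1 k ks \<noteq> []" using 3 by auto
      then have "0 < sw (remove1 k ks)" by (rule sw_pos)
      ultimately have "(1/2::real)^k < (1/2)^n" using less.prems by linarith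
      then show "n < k" by (simp add: power_strict_decreasing_iff)
    qed
    define M where "M = Max (set ks)"
    have Min: "M \<in> set ks" unfolding M_def using 3 by (intro Max_in) auto
    have Mmax: "k \<le> M" if "k \<in> set ks" for k unfolding M_def using that by simp
    have "n < M" using gt Min by blast
    then obtain M' where M': "M = Suc M'" "n \<le> M'" by (cases M) auto
    show ?thesis
    proof (cases "2 \<le> count (mset ks) M")
      case True
      define rest where "rest = remove1 M (remove1 M ks)"
      have "count (mset (remove1 M ks)) M \<ge> 1" using True by simp
      then have "M \<in> set (remove1 M ks)" by (metis count_mset_0_iff not_one_le_zero)
      then have pm: "mset ks = mset (M # M # rest)" unfolding rest_def
        using Min by (metis mset_remove1_cons mset.simps(2))
      have "x \<in> W (M # M # rest)" using W_perm[OF pm less.prems(2)] .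
      then obtain a b y where aby: "x = a + (b + y)" "a \<in> V M" "b \<in> V M" "y \<in> W rest" by auto
      have "a + b \<in> V M'" using aby M' plusV by blast
      moreover have "x = (a + b) + y" using aby by (simp add: add.assoc)
      ultimately have xin: "x \<in> W (M' # rest)" using aby(4) by auto
      have "sw (M' # rest) = sw (M # M # rest)" using M' by simp
      also have "\<dots> = sw ks" using sw_perm[OF pm] by simp
      finally have swle: "sw (M' # rest) \<le> (1/2)^n" using less.prems by simp
      have "sum_list (M' # rest) < sum_list (M # M # rest)" using M' by simp
      also have "\<dots> = sum_list ks" using sum_list_perm[OF pm] by simp
      finally show ?thesis by (rule less.hyps[OF _ swle xin])
    next
      case False
      define rest where "rest = remove1 M ks"
      have pm: "mset ks = mset (M # rest)" unfolding rest_def using Min by simp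
      have "count (mset ks) M \<noteq> 0" using Min by simp
      then have cnt: "count (mset ks) M = 1" using False by linarith
      have "count (mset rest) M = 0" using cnt unfolding rest_def by simp
      then have Mnot: "M \<notin> set rest" by simp
      have restle: "\<forall>k\<in>set rest. k \<le> M'"
      proof
        fix k assume k: "k \<in> set rest"
        then have "k \<in> set ks" unfolding rest_def by (meson notin_set_remove1)
        then have "k \<le> M" by (rule Mmax)
        moreover have "k \<noteq> M" using k Mnot by blast
        ultimately show "k \<le> M'" using M' by simp
      qed
      have "x \<in> W (M # rest)" using W_perm[OF pm less.prems(2)] .
      then obtain a y where ay: "x = a + y" "a \<in> V M" "y \<in> W rest" by auto
      have "a \<in> V M'" using ay M' V_Suc by blast
      then have xin: "x \<in> W (M' # rest)" using ay by auto
      define A where "A = (\<Sum>k\<leftarrow>rest. (2::nat)^(M'-k))"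
      have A: "sw rest * 2^M' = real A" unfolding A_def using sw_mult[OF restle] by simp
      have B: "(1/2::real)^n * 2^M' = real (2^(M'-n))" using half_pow_mult[OF M'(2)] by simp
      have h: "(1/2::real)^M * 2^M' = 1/2" using M' by (simp add: power_one_over)
      have "sw ks = (1/2)^M + sw rest" using sw_perm[OF pm] by simp
      then have "((1/2)^M + sw rest) * 2^M' \<le> (1/2::real)^n * 2^M'" using less.prems by simp
      then have "1/2 + real A \<le> real (2^(M'-n))" using A B h by (simp add: distrib_right)
      then have "A < 2^(M'-n)" by linarith
      then have "1 + real A \<le> real (2^(M'-n))" by linarith
      then have "((1/2)^M' + sw rest) * 2^M' \<le> (1/2::real)^n * 2^M'"
        using A B by (simp add: distrib_right power_one_over)
      then have swle: "sw (M' # rest) \<le> (1/2)^n" by simp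
      have "sum_list (M' # rest) < sum_list (M # rest)" using M' by simp
      also have "\<dots> = sum_list ks" using sum_list_perm[OF pm] by simp
      finally show ?thesis by (rule less.hyps[OF _ swle xin])
    qed
  qed
qed

definition p :: "'a \<Rightarrow> real" where "p x = Inf (sw ` {ks. x \<in> W ks})"

lemma W_ex: "x \<in> W [0]"
  using V0 by (auto intro!: exI[of _ x])

lemma S_ne: "sw ` {ks. x \<in> W ks} \<noteq> {}"
  using W_ex by blast

lemma S_bdd: "bdd_below (sw ` {ks. x \<in> W ks})"
  by (rule bdd_belowI[of _ 0]) (auto simp: sw_nonneg)

lemma p_le: "x \<in> W ks \<Longrightarrow> p x \<le> sw ks"
  unfolding p_def by (rule cInf_lower) (auto intro: S_bdd)

lemma p_nonneg: "0 \<le> p x"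
  unfolding p_def using S_ne by (rule cInf_greatest) (auto simp: sw_nonneg)

lemma p_V: "x \<in> V n \<Longrightarrow> p x \<le> (1/2)^n"
proof -
  assume "x \<in> V n"
  then have "x \<in> W [n]" by (auto intro!: exI[of _ x])
  then show ?thesis using p_le by fastforce
qed

lemma p_lt: "p x < (1/2)^n \<Longrightarrow> x \<in> V n"
proof -
  assume "p x < (1/2)^n"
  then obtain r where "r \<in> sw ` {ks. x \<in> W ks}" "r < (1/2)^n"
    unfolding p_def using cInf_lessD[OF S_ne] by blast
  then obtain ks where "x \<in> W ks" "sw ks < (1/2)^n" by auto
  then show ?thesis using carry by (meson less_imp_le)
qed

lemma p_add: "p (x + y) \<le> p x + p y"
proof -
  have h: "p (x + y) - sw ks \<le> p y" if "x \<in> W ks" for ks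
  proof -
    have "p (x + y) - sw ks \<le> sw ls" if "y \<in> W ls" for ls
      using p_le[OF W_append[OF \<open>x \<in> W ks\<close> that]] by simp
    then have "p (x + y) - sw ks \<le> Inf (sw ` {ls. y \<in> W ls})"
      using S_ne by (intro cInf_greatest) auto
    then show ?thesis unfolding p_def .
  qed
  have "p (x + y) - p y \<le> Inf (sw ` {ks. x \<in> W ks})"
    using S_ne h by (intro cInf_greatest) force+
  then show ?thesis unfolding p_def by simp
qed

lemma p_neg: "p (- x) = p x"
proof -
  have "{ks. - x \<in> W ks} = {ks. x \<in> W ks}" using W_neg by force
  then show ?thesis unfolding p_def by simp
qed

lemma p_zero: "p 0 = 0"
proof -
  have pn: "p 0 \<le> (1/2)^n" for n using p_V zeroV by blast
  have "p 0 \<le> 0"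
  proof (rule ccontr)
    assume "\<not> p 0 \<le> 0"
    then obtain n where "(1/2::real)^n < p 0" using real_arch_pow_inv[of "p 0" "1/2"] by auto
    then show False using pn[of n] by simp
  qed
  then show ?thesis using p_nonneg[of 0] by simp
qed

lemma p_eq0: "p x = 0 \<longleftrightarrow> x = 0"
proof
  assume "p x = 0"
  then have "x \<in> V n" for n by (intro p_lt) simp
  then show "x = 0" using sepV by blast
qed (simp add: p_zero)

definition dd :: "'a \<Rightarrow> 'a \<Rightarrow> real" where "dd x y = p (x - y)"

lemma dd_metric: "Metric_space UNIV dd"
proof
  show "0 \<le> dd x y" for x y by (simp add: dd_def p_nonneg)
  show "dd x y = dd y x" for x y unfolding dd_def by (metis p_neg minus_diff_eq)
  show "dd x y = 0 \<longleftrightarrow> x = y" for x y by (simp add: dd_def p_eq0)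
  show "dd x z \<le> dd x y + dd y z" for x y z
    unfolding dd_def using p_add[of "x - y" "y - z"] by simp
qed

lemma dd_trans: "dd (x + a) (y + a) = dd x y" by (simp add: dd_def)

sublocale DM: Metric_space UNIV dd by (rule dd_metric)

lemma dd_small: "y - x \<in> V n \<Longrightarrow> dd x y \<le> (1/2)^n"
  unfolding dd_def by (metis p_V p_neg minus_diff_eq)

lemma dd_lt: "dd x y < (1/2)^n \<Longrightarrow> y - x \<in> V n"
  unfolding dd_def by (metis p_lt V_neg minus_diff_eq)

lemma half_pow_lt: "0 < r \<Longrightarrow> \<exists>n. (1/2::real)^n < r"
  using real_arch_pow_inv[of r "1/2"] by auto

lemma open_sig_V: "openin DM.mtopology U \<Longrightarrow> x \<in> U \<Longrightarrow> \<exists>n. \<forall>y. y - x \<in> V n \<longrightarrow> y \<in> U"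
proof -
  assume U: "openin DM.mtopology U" and x: "x \<in> U"
  then obtain r where r: "r > 0" "DM.mball x r \<subseteq> U" unfolding DM.openin_mtopology by blast
  then obtain n where n: "(1/2::real)^n < r" using half_pow_lt by blast
  have "y \<in> U" if "y - x \<in> V n" for y
  proof -
    have "dd x y < r" using dd_small[OF that] n by linarith
    then show ?thesis using r by auto
  qed
  then show ?thesis by blast
qed

lemma sig_openI: "(\<And>x. x \<in> U \<Longrightarrow> \<exists>n. \<forall>y. y - x \<in> V n \<longrightarrow> y \<in> U) \<Longrightarrow> openin DM.mtopology U"
  unfolding DM.openin_mtopology
proof (intro conjI allI impI)
  fix x assume h: "\<And>x. x \<in> U \<Longrightarrow> \<exists>n. \<forall>y. y - x \<in> V n \<longrightarrow> y \<in> U" and x: "x \<in> U"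
  then obtain n where n: "\<forall>y. y - x \<in> V n \<longrightarrow> y \<in> U" by blast
  have "DM.mball x ((1/2)^n) \<subseteq> U" using n dd_lt by auto
  then show "\<exists>r>0. DM.mball x r \<subseteq> U" by (intro exI[of _ "(1/2)^n"]) auto
qed simp

lemma ball_V: "DM.mball x ((1/2)^n) \<subseteq> {y. y - x \<in> V n}"
  using dd_lt by auto

lemma zero_nbhd_V: "zero_nbhd DM.mtopology (V n)"
  unfolding zero_nbhd_def
  by (intro exI[of _ "DM.mball 0 ((1/2)^n)"]) (use ball_V[of 0 n] in auto)

lemma zero_nbhd_sig: "zero_nbhd DM.mtopology U \<Longrightarrow> \<exists>n. V n \<subseteq> U"
  unfolding zero_nbhd_def using open_sig_V by fastforce

lemma sig_add: "continuous_map (prod_topology DM.mtopology DM.mtopology) DM.mtopology (\<lambda>(x, y). x + y)"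
  unfolding continuous_map_def
proof (intro conjI allI impI)
  fix U assume U: "openin DM.mtopology U"
  show "openin (prod_topology DM.mtopology DM.mtopology)
          {z \<in> topspace (prod_topology DM.mtopology DM.mtopology). (case z of (x, y) \<Rightarrow> x + y) \<in> U}"
    unfolding openin_prod_topology_alt
  proof (intro allI impI)
    fix x y assume "(x, y) \<in> {z \<in> topspace (prod_topology DM.mtopology DM.mtopology). (case z of (x, y) \<Rightarrow> x + y) \<in> U}"
    then have xy: "x + y \<in> U" by simp
    obtain n where n: "\<forall>z. z - (x + y) \<in> V n \<longrightarrow> z \<in> U" using open_sig_V[OF U xy] by blast
    let ?A = "DM.mball x ((1/2)^Suc n)" and ?B = "DM.mball y ((1/2)^Suc n)"
    have "a + b \<in> U" if "a \<in> ?A" "b \<in> ?B" for a b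
    proof -
      from that have "a - x \<in> V (Suc n)" "b - y \<in> V (Suc n)" using ball_V by blast+
      then have "(a - x) + (b - y) \<in> V n" by (rule plusV)
      then have "(a + b) - (x + y) \<in> V n" by (simp add: algebra_simps)
      then show "a + b \<in> U" using n by blast
    qed
    then have "?A \<times> ?B \<subseteq> {z \<in> topspace (prod_topology DM.mtopology DM.mtopology). (case z of (x, y) \<Rightarrow> x + y) \<in> U}"
      by auto
    then show "\<exists>A B. openin DM.mtopology A \<and> openin DM.mtopology B \<and> x \<in> A \<and> y \<in> B \<and>
        A \<times> B \<subseteq> {z \<in> topspace (prod_topology DM.mtopology DM.mtopology). (case z of (x, y) \<Rightarrow> x + y) \<in> U}"
      by (intro exI[of _ ?A] exI[of _ ?B]) auto
  qed
qed simp

lemma sig_scale: "continuous_map (prod_topology euclideanreal DM.mtopology) DM.mtopology (\<lambda>(c, x). c *\<^sub>R x)"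
  unfolding continuous_map_def
proof (intro conjI allI impI)
  fix U assume U: "openin DM.mtopology U"
  show "openin (prod_topology euclideanreal DM.mtopology)
          {z \<in> topspace (prod_topology euclideanreal DM.mtopology). (case z of (c, x) \<Rightarrow> c *\<^sub>R x) \<in> U}"
    unfolding openin_prod_topology_alt
  proof (intro allI impI)
    fix c x assume "(c, x) \<in> {z \<in> topspace (prod_topology euclideanreal DM.mtopology). (case z of (c, x) \<Rightarrow> c *\<^sub>R x) \<in> U}"
    then have cx: "c *\<^sub>R x \<in> U" by simp
    obtain n where n: "\<forall>z. z - c *\<^sub>R x \<in> V n \<longrightarrow> z \<in> U" using open_sig_V[OF U cx] by blast
    obtain j where j: "\<bar>c\<bar> + 1 < (2::real)^j" using real_arch_pow[of 2 "\<bar>c\<bar> + 1"] by auto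
    obtain \<delta> where \<delta>: "\<delta> > 0" "\<forall>t. \<bar>t\<bar> < \<delta> \<longrightarrow> t *\<^sub>R x \<in> V (Suc n)" using absorbV by blast
    let ?A = "ball c (min \<delta> 1)" and ?B = "DM.mball x ((1/2)^(Suc n + j))"
    have "a *\<^sub>R b \<in> U" if a: "a \<in> ?A" and b: "b \<in> ?B" for a b
    proof -
      from a have d: "\<bar>a - c\<bar> < \<delta>" "\<bar>a\<bar> \<le> 2^j" using j by (auto simp: dist_real_def)
      have "b - x \<in> V (Suc n + j)" using b ball_V by blast
      then have 1: "a *\<^sub>R (b - x) \<in> V (Suc n)" using V_scale d(2) by blast
      have 2: "(a - c) *\<^sub>R x \<in> V (Suc n)" using \<delta> d(1) by blast
      have "a *\<^sub>R (b - x) + (a - c) *\<^sub>R x \<in> V n" using plusV[OF 1 2] .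
      then have "a *\<^sub>R b - c *\<^sub>R x \<in> V n" by (simp add: algebra_simps)
      then show "a *\<^sub>R b \<in> U" using n by blast
    qed
    then have "?A \<times> ?B \<subseteq> {z \<in> topspace (prod_topology euclideanreal DM.mtopology). (case z of (c, x) \<Rightarrow> c *\<^sub>R x) \<in> U}"
      by auto
    moreover have "c \<in> ?A" using \<delta> by simp
    ultimately show "\<exists>A B. openin euclideanreal A \<and> openin DM.mtopology B \<and> c \<in> A \<and> x \<in> B \<and>
        A \<times> B \<subseteq> {z \<in> topspace (prod_topology euclideanreal DM.mtopology). (case z of (c, x) \<Rightarrow> c *\<^sub>R x) \<in> U}"
      by (intro exI[of _ ?A] exI[of _ ?B]) (auto simp flip: open_openin)
  qed
qed simp

lemma sig_linear: "linear_topology DM.mtopology"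
  unfolding linear_topology_def using sig_add sig_scale DM.Hausdorff_space_mtopology by simp

lemma sig_locally_solid: "locally_solid DM.mtopology"
  unfolding locally_solid_def using sig_linear zero_nbhd_sig zero_nbhd_V solidV by blast

end

lemma half_pow_lt': "0 < r \<Longrightarrow> \<exists>n. (1/2::real)^n < r"
  using real_arch_pow_inv[of r "1/2"] by auto

lemma lin_translate:
  assumes "linear_topology T" "openin T U"
  shows "openin T {z. a + z \<in> U}"
proof -
  have top: "topspace T = UNIV" using assms(1) by (simp add: linear_topology_def)
  have c1: "continuous_map T (prod_topology T T) (\<lambda>z. (a, z))"
    by (intro continuous_map_pairedI) (auto simp: top)
  have c2: "continuous_map (prod_topology T T) T (\<lambda>(x, y). x + y)"
    using assms(1) by (simp add: linear_topology_def)
  have "continuous_map T T ((\<lambda>(x, y). x + y) \<circ> (\<lambda>z. (a, z)))"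
    by (rule continuous_map_compose[OF c1 c2])
  then have "continuous_map T T (\<lambda>z. a + z)" by (simp add: o_def)
  from openin_continuous_map_preimage[OF this assms(2)] show ?thesis by (simp add: top)
qed

lemma zero_nbhd_Int: "zero_nbhd T U \<Longrightarrow> zero_nbhd T U' \<Longrightarrow> zero_nbhd T (U \<inter> U')"
proof -
  assume "zero_nbhd T U" "zero_nbhd T U'"
  then obtain W W' where "openin T W" "0 \<in> W" "W \<subseteq> U" "openin T W'" "0 \<in> W'" "W' \<subseteq> U'"
    unfolding zero_nbhd_def by blast
  then show ?thesis unfolding zero_nbhd_def by (intro exI[of _ "W \<inter> W'"]) auto
qed

lemma lin_half:
  assumes "linear_topology T" "zero_nbhd T U"
  shows "\<exists>Y. zero_nbhd T Y \<and> (\<forall>a\<in>Y. \<forall>b\<in>Y. a + b \<in> U)"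
proof -
  have top: "topspace T = UNIV" using assms(1) by (simp add: linear_topology_def)
  obtain W where W: "openin T W" "0 \<in> W" "W \<subseteq> U" using assms(2) unfolding zero_nbhd_def by blast
  have c2: "continuous_map (prod_topology T T) T (\<lambda>(x, y). x + y)"
    using assms(1) by (simp add: linear_topology_def)
  define S where "S = {z \<in> topspace (prod_topology T T). (\<lambda>(x, y). x + y) z \<in> W}"
  have O: "openin (prod_topology T T) S"
    unfolding S_def by (rule openin_continuous_map_preimage[OF c2 W(1)])
  have Z: "(0, 0) \<in> S"
    using W by (simp add: top S_def)
  obtain A B where AB: "openin T A" "openin T B" "0 \<in> A" "0 \<in> B" "A \<times> B \<subseteq> S"
    using O[unfolded openin_prod_topology_alt, rule_format, OF Z] by blast
  have "zero_nbhd T (A \<inter> B)" unfolding zero_nbhd_def using AB(1-4)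
    by (intro exI[of _ "A \<inter> B"]) (simp add: openin_Int)
  moreover have "\<forall>a\<in>A \<inter> B. \<forall>b\<in>A \<inter> B. a + b \<in> U"
  proof (intro ballI)
    fix a b assume "a \<in> A \<inter> B" "b \<in> A \<inter> B"
    then have "(a, b) \<in> S" using AB(5) by blast
    then have "a + b \<in> W" unfolding S_def by simp
    then show "a + b \<in> U" using W(3) by blast
  qed
  ultimately show ?thesis by blast
qed

lemma lin_absorb:
  assumes "linear_topology T" "zero_nbhd T U"
  shows "\<exists>\<delta>>0. \<forall>t. \<bar>t\<bar> < \<delta> \<longrightarrow> t *\<^sub>R x \<in> U"
proof -
  have top: "topspace T = UNIV" using assms(1) by (simp add: linear_topology_def)
  obtain W where W: "openin T W" "0 \<in> W" "W \<subseteq> U" using assms(2) unfolding zero_nbhd_def by blast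
  have c1: "continuous_map euclideanreal (prod_topology euclideanreal T) (\<lambda>t. (t, x))"
    by (intro continuous_map_pairedI) (auto simp: top)
  have c2: "continuous_map (prod_topology euclideanreal T) T (\<lambda>(c, x). c *\<^sub>R x)"
    using assms(1) by (simp add: linear_topology_def)
  have "continuous_map euclideanreal T ((\<lambda>(c, x). c *\<^sub>R x) \<circ> (\<lambda>t. (t, x)))"
    by (rule continuous_map_compose[OF c1 c2])
  then have "continuous_map euclideanreal T (\<lambda>t. t *\<^sub>R x)" by (simp add: o_def)
  from openin_continuous_map_preimage[OF this W(1)] have "openin euclideanreal {t. t *\<^sub>R x \<in> W}"
    by simp
  then have O: "open {t. t *\<^sub>R x \<in> W}" by (metis open_openin)
  have Z: "0 \<in> {t. t *\<^sub>R x \<in> W}" using W by simp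
  obtain e where e: "e > 0" "ball 0 e \<subseteq> {t. t *\<^sub>R x \<in> W}"
    using open_contains_ball_eq[OF O, THEN iffD1, OF Z] by blast
  have "t *\<^sub>R x \<in> U" if "\<bar>t\<bar> < e" for t
  proof -
    have "t \<in> ball 0 e" using that by (simp add: dist_real_def)
    then have "t *\<^sub>R x \<in> W" using e(2) by blast
    then show ?thesis using W(3) by blast
  qed
  then show ?thesis using e(1) by blast
qed

lemma construct:
  fixes \<tau> \<tau>s :: "'a::{ordered_real_vector,lattice} topology"
  assumes ls: "locally_solid \<tau>" and lin: "linear_topology \<tau>s" and met: "metrizable_space \<tau>s"
    and crs: "coarser \<tau>s \<tau>"
    and QU: "Q UNIV" and QV: "\<And>U. zero_nbhd \<tau> U \<Longrightarrow> \<exists>V. zero_nbhd \<tau> V \<and> solid V \<and> Q V \<and> V \<subseteq> U"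
  shows "\<exists>\<sigma>. metrizable_space \<sigma> \<and> locally_solid \<sigma> \<and> coarser \<sigma> \<tau> \<and> coarser \<tau>s \<sigma>
     \<and> (\<forall>U. zero_nbhd \<sigma> U \<longrightarrow> (\<exists>V. zero_nbhd \<sigma> V \<and> solid V \<and> Q V \<and> V \<subseteq> U))"
proof -
  have lint: "linear_topology \<tau>" using ls by (simp add: locally_solid_def)
  have topt: "topspace \<tau> = UNIV" using lint by (simp add: linear_topology_def)
  have tops: "topspace \<tau>s = UNIV" using lin by (simp add: linear_topology_def)
  obtain M m where Mm: "Metric_space M m" "\<tau>s = Metric_space.mtopology M m"
    using met unfolding metrizable_space_def by blast
  have MU: "M = UNIV" using Metric_space.topspace_mtopology[OF Mm(1)] Mm(2) tops by simp
  interpret MS: Metric_space UNIV m using Mm MU by simp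
  have ts: "\<tau>s = MS.mtopology" using Mm MU by simp
  define B where "B n = MS.mball 0 ((1/2)^n)" for n
  have Bz: "zero_nbhd \<tau> (B n)" for n
  proof -
    have "openin \<tau> (B n)" using crs unfolding coarser_def B_def ts by blast
    then show ?thesis unfolding zero_nbhd_def B_def by (intro exI[of _ "MS.mball 0 ((1/2)^n)"]) auto
  qed
  have Bbase: "\<exists>n. B n \<subseteq> U" if U: "openin \<tau>s U" "0 \<in> U" for U
  proof -
    obtain r where "r > 0" "MS.mball 0 r \<subseteq> U" using U unfolding ts MS.openin_mtopology by blast
    moreover obtain n where "(1/2::real)^n < r" using half_pow_lt' \<open>r > 0\<close> by blast
    ultimately have "B n \<subseteq> U" unfolding B_def using MS.mball_subset_concentric[of "(1/2)^n" r 0] by simp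
    then show ?thesis by blast
  qed
  have BS: "B (Suc n) \<subseteq> B n" for n unfolding B_def by (rule MS.mball_subset_concentric) simp
  have step: "\<exists>Z. zero_nbhd \<tau> Z \<and> solid Z \<and> Q Z \<and> Z \<subseteq> B (Suc n) \<and> (\<forall>a\<in>Z. \<forall>b\<in>Z. a + b \<in> U)"
    if U: "zero_nbhd \<tau> U" for n U
  proof -
    obtain Y where Y: "zero_nbhd \<tau> Y" "\<forall>a\<in>Y. \<forall>b\<in>Y. a + b \<in> U" using lin_half[OF lint U] by blast
    have "zero_nbhd \<tau> (Y \<inter> B (Suc n))" by (rule zero_nbhd_Int[OF Y(1) Bz])
    then obtain Z where Z: "zero_nbhd \<tau> Z" "solid Z" "Q Z" "Z \<subseteq> Y \<inter> B (Suc n)" using QV by blast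
    have "\<forall>a\<in>Z. \<forall>b\<in>Z. a + b \<in> U"
    proof (intro ballI)
      fix a b assume "a \<in> Z" "b \<in> Z"
      then have "a \<in> Y" "b \<in> Y" using Z(4) by auto
      then show "a + b \<in> U" using Y(2) by blast
    qed
    moreover have "Z \<subseteq> B (Suc n)" using Z(4) by auto
    ultimately show ?thesis using Z(1-3) by blast
  qed
  define P where "P n Vn Z \<longleftrightarrow> zero_nbhd \<tau> Z \<and> solid Z \<and> Q Z \<and> Z \<subseteq> B (Suc n) \<and> (\<forall>a\<in>Z. \<forall>b\<in>Z. a + b \<in> Vn)"
    for n Vn Z
  define V where "V = rec_nat UNIV (\<lambda>n Vn. SOME Z. P n Vn Z)"
  have V0: "V 0 = UNIV" by (simp add: V_def)
  have VS: "V (Suc n) = (SOME Z. P n (V n) Z)" for n by (simp add: V_def)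
  have props: "zero_nbhd \<tau> (V n) \<and> solid (V n) \<and> Q (V n)" for n
  proof (induction n)
    case 0
    have "openin \<tau> UNIV" using openin_topspace[of \<tau>] topt by simp
    then have "zero_nbhd \<tau> UNIV" unfolding zero_nbhd_def by blast
    then show ?case using QU by (simp add: V0 solid_def)
  next
    case (Suc n)
    then have "\<exists>Z. P n (V n) Z" unfolding P_def by (intro step) blast
    then have "P n (V n) (V (Suc n))" unfolding VS by (rule someI_ex)
    then show ?case unfolding P_def by blast
  qed
  have propsS: "V (Suc n) \<subseteq> B (Suc n) \<and> (\<forall>a\<in>V (Suc n). \<forall>b\<in>V (Suc n). a + b \<in> V n)" for n
  proof -
    have "\<exists>Z. P n (V n) Z" unfolding P_def by (intro step) (use props[of n] in blast)
    then have "P n (V n) (V (Suc n))" unfolding VS by (rule someI_ex)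
    then show ?thesis unfolding P_def by blast
  qed
  have VB: "\<exists>n. V n \<subseteq> U" if U: "openin \<tau>s U" "0 \<in> U" for U
  proof -
    obtain n where "B n \<subseteq> U" using Bbase[OF U] by blast
    then have "V (Suc n) \<subseteq> U" using propsS[of n] BS[of n] by blast
    then show ?thesis by blast
  qed
  interpret VS: Vseq V
  proof
    show "V 0 = UNIV" by (rule V0)
    show "0 \<in> V n" for n using props[of n] unfolding zero_nbhd_def by blast
    show "solid (V n)" for n using props by blast
    show "x + y \<in> V n" if "x \<in> V (Suc n)" "y \<in> V (Suc n)" for x y n using propsS that by blast
    show "\<exists>n. x \<notin> V n" if "x \<noteq> 0" for x
    proof -
      have "Hausdorff_space \<tau>s" using lin by (simp add: linear_topology_def)
      from this[unfolded Hausdorff_space_def, rule_format, of 0 x] that tops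
      obtain U U' where "openin \<tau>s U" "openin \<tau>s U'" "0 \<in> U" "x \<in> U'" "disjnt U U'"
        by auto
      moreover obtain n where "V n \<subseteq> U" using VB calculation by blast
      ultimately show ?thesis by (meson disjnt_iff subsetD)
    qed
    show "\<exists>\<delta>>0. \<forall>t. \<bar>t\<bar> < \<delta> \<longrightarrow> t *\<^sub>R x \<in> V n" for x n
      using lin_absorb[OF lint conjunct1[OF props[of n]]] by blast
  qed
  let ?s = "VS.DM.mtopology"
  have c1: "coarser ?s \<tau>" unfolding coarser_def
  proof (intro allI impI)
    fix U assume U: "openin ?s U"
    show "openin \<tau> U" unfolding openin_subopen[of \<tau> U]
    proof
      fix x assume x: "x \<in> U"
      obtain n where n: "\<forall>y. y - x \<in> V n \<longrightarrow> y \<in> U" using VS.open_sig_V[OF U x] by blast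
      obtain W where W: "openin \<tau> W" "0 \<in> W" "W \<subseteq> V n" using props[of n] unfolding zero_nbhd_def by blast
      have "openin \<tau> {y. - x + y \<in> W}" by (rule lin_translate[OF lint W(1)])
      moreover have "x \<in> {y. - x + y \<in> W}" using W by simp
      moreover have "{y. - x + y \<in> W} \<subseteq> U"
      proof
        fix y assume "y \<in> {y. - x + y \<in> W}"
        then have "y - x \<in> V n" using W(3) by (auto simp: add.commute)
        then show "y \<in> U" using n by blast
      qed
      ultimately show "\<exists>T. openin \<tau> T \<and> x \<in> T \<and> T \<subseteq> U" by blast
    qed
  qed
  have c2: "coarser \<tau>s ?s" unfolding coarser_def
  proof (intro allI impI)
    fix U assume U: "openin \<tau>s U"
    show "openin ?s U"
    proof (rule VS.sig_openI)
      fix x assume x: "x \<in> U"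
      have "openin \<tau>s {z. x + z \<in> U}" by (rule lin_translate[OF lin U])
      moreover have "0 \<in> {z. x + z \<in> U}" using x by simp
      ultimately obtain n where "V n \<subseteq> {z. x + z \<in> U}" using VB by blast
      then have "\<forall>y. y - x \<in> V n \<longrightarrow> y \<in> U"
      proof (intro allI impI)
        fix y assume "y - x \<in> V n"
        then have "x + (y - x) \<in> U" using \<open>V n \<subseteq> {z. x + z \<in> U}\<close> by blast
        then show "y \<in> U" by simp
      qed
      then show "\<exists>n. \<forall>y. y - x \<in> V n \<longrightarrow> y \<in> U" by blast
    qed
  qed
  have c3: "\<forall>U. zero_nbhd ?s U \<longrightarrow> (\<exists>V. zero_nbhd ?s V \<and> solid V \<and> Q V \<and> V \<subseteq> U)"
  proof (intro allI impI)
    fix U assume "zero_nbhd ?s U"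
    then obtain n where n: "V n \<subseteq> U" using VS.zero_nbhd_sig by blast
    show "\<exists>V. zero_nbhd ?s V \<and> solid V \<and> Q V \<and> V \<subseteq> U"
      apply (rule exI[of _ "V n"])
      using VS.zero_nbhd_V[of n] props[of n] n by simp
  qed
  show ?thesis
    by (intro exI[of _ ?s] conjI VS.DM.metrizable_space_mtopology VS.sig_locally_solid c1 c2 c3)
qed

theorem proposition3p4:
  fixes \<tau> \<tau>s :: "'a::{ordered_real_vector,lattice} topology"
  assumes arch: "archimedean_vl TYPE('a)"
    and ls: "locally_solid \<tau>"
    and lin: "linear_topology \<tau>s"
    and met: "metrizable_space \<tau>s"
    and crs: "coarser \<tau>s \<tau>"
  shows "(\<exists>\<sigma>. metrizable_space \<sigma> \<and> locally_solid \<sigma> \<and> coarser \<sigma> \<tau> \<and> coarser \<tau>s \<sigma>)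
    \<and> (\<forall>\<sigma>. metrizable_space \<sigma> \<and> locally_solid \<sigma> \<and> coarser \<sigma> \<tau> \<and> coarser \<tau>s \<sigma> \<longrightarrow>
           (o_Lebesgue \<tau> \<longrightarrow> o_Lebesgue \<sigma>) \<and> (uo_Lebesgue \<tau> \<longrightarrow> uo_Lebesgue \<sigma>))
    \<and> (Fatou_topology \<tau> \<longrightarrow>
         (\<exists>\<sigma>. metrizable_space \<sigma> \<and> locally_solid \<sigma> \<and> coarser \<sigma> \<tau> \<and> coarser \<tau>s \<sigma>
              \<and> Fatou_topology \<sigma>))"
proof (intro conjI allI impI)
  show "\<exists>\<sigma>. metrizable_space \<sigma> \<and> locally_solid \<sigma> \<and> coarser \<sigma> \<tau> \<and> coarser \<tau>s \<sigma>"
  proof -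
    have "\<exists>V. zero_nbhd \<tau> V \<and> solid V \<and> True \<and> V \<subseteq> U" if "zero_nbhd \<tau> U" for U
      using ls that unfolding locally_solid_def by blast
    from construct[OF ls lin met crs, where Q="\<lambda>_. True", OF _ this]
    show ?thesis by blast
  qed
next
  fix \<sigma> :: "'a topology"
  assume h: "metrizable_space \<sigma> \<and> locally_solid \<sigma> \<and> coarser \<sigma> \<tau> \<and> coarser \<tau>s \<sigma>"
  then have tops: "topspace \<sigma> = UNIV" by (simp add: locally_solid_def linear_topology_def)
  have lim: "limitin \<sigma> id x F" if "limitin \<tau> id x F" for x and F :: "'a filter"
    using that h tops unfolding limitin_def coarser_def by auto
  {
    assume "o_Lebesgue \<tau>"
    then show "o_Lebesgue \<sigma>" using h lim unfolding o_Lebesgue_def by blast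
  next
    assume "uo_Lebesgue \<tau>"
    then show "uo_Lebesgue \<sigma>" using h lim unfolding uo_Lebesgue_def by blast
  }
next
  assume F: "Fatou_topology \<tau>"
  have "order_closed (UNIV :: 'a set)" by (simp add: order_closed_def)
  moreover have "\<exists>V. zero_nbhd \<tau> V \<and> solid V \<and> order_closed V \<and> V \<subseteq> U" if "zero_nbhd \<tau> U" for U
    using F that unfolding Fatou_topology_def by blast
  ultimately obtain \<sigma> where "metrizable_space \<sigma> \<and> locally_solid \<sigma> \<and> coarser \<sigma> \<tau> \<and> coarser \<tau>s \<sigma>
     \<and> (\<forall>U. zero_nbhd \<sigma> U \<longrightarrow> (\<exists>V. zero_nbhd \<sigma> V \<and> solid V \<and> order_closed V \<and> V \<subseteq> U))"
    using construct[OF ls lin met crs, where Q=order_closed] by blast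
  then show "\<exists>\<sigma>. metrizable_space \<sigma> \<and> locally_solid \<sigma> \<and> coarser \<sigma> \<tau> \<and> coarser \<tau>s \<sigma> \<and> Fatou_topology \<sigma>"
    unfolding Fatou_topology_def by blast
qed

end
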